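(* Let $0<q<1$, $\Re\eta>-1$, $\lambda\ge1$, and let $\phi(z)=1+\sum_{n\ge1}E_nz^n$ be analytic in $\Delta$ with $\Re\phi>0$, $\phi(0)=1$, $E_1>0$. Put $$\Gamma=2(\lambda\widetilde{[3]}_q-1)L_3+\lambda(\lambda-1)\widetilde{[2]}_q^{\,2}L_2^2,\qquad \Xi=2(\lambda\widetilde{[3]}_q-1)E_1^2L_3+\lambda\big[(\lambda-1)E_1^2+2\lambda(E_1-E_2)\big]\widetilde{[2]}_q^{\,2}L_2^2,$$ assumed nonzero. If $f(z)=z+\sum_{n\ge2}a_nz^n$ belongs to $\widetilde{\mathcal{S}^*_{\Sigma}}{}^{\eta}_q(1,\lambda;\phi)$, then $$|a_2|\le\min\left\{\frac{E_1}{\lambda|L_2|\widetilde{[2]}_q},\ \sqrt{\frac{2(|E_2-E_1|+E_1)}{|\Gamma|}},\ \frac{E_1\sqrt{2E_1}}{\sqrt{|\Xi|}}\right\},\qquad |a_3|\le\frac{E_1}{(\lambda\widetilde{[3]}_q-1)|L_3|}+\min\left\{\frac{E_1^2}{\lambda^2\widetilde{[2]}_q^{\,2}|L_2|^2},\ \frac{2(|E_2-E_1|+E_1)}{|\Gamma|}\right\}.$$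
   Context: $\Delta=\{z\in\mathbb{C}:|z|<1\}$. $\Sigma$ denotes the class of analytic $f(z)=z+\sum_{n\ge2}a_nz^n$ on $\Delta$ that are univalent and whose inverse $g=f^{-1}$ extends univalently to $\Delta$. For $0<q<1$, $\chi\in\mathbb C$: $\widetilde{[\chi]}_q=\frac{q^{\chi}-q^{-\chi}}{q-q^{-1}}$. Symmetric $q$-derivative: $\widetilde{\mathcal D}_qF(z)=\frac{F(qz)-F(q^{-1}z)}{(q-q^{-1})z}$ ($z\ne0$), $\widetilde{\mathcal D}_qF(0)=F'(0)$. For $\Re\eta>-1$, $\mathcal J^{\eta}_qf(z)=z+\sum_{n\ge2}L_na_nz^n$ with $L_n=\widetilde{[1+\eta]}_q/\widetilde{[n+\eta]}_q$. Subordination $F\prec G$: $F=G\circ h$, $h$ analytic, $h(0)=0$, $|h|<1$. Principal branches for powers. The class $\widetilde{\mathcal{S}^*_{\Sigma}}{}^{\eta}_q(1,\lambda;\phi)$ consists of $f\in\Sigma$, $g=f^{-1}$, with $F=\mathcal J^\eta_qf$, $G=\mathcal J^\eta_qg$ satisfying $$\frac{2z[\widetilde{\mathcal D}_qF(z)]^{\lambda}}{F(z)-F(-z)}\prec\phi(z),\qquad \frac{2w[\widetilde{\mathcal D}_qG(w)]^{\lambda}}{G(w)-G(-w)}\prec\phi(w)\qquad(z,w\in\Delta).$$ *)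

theory Defs
  imports "HOL-Analysis.Analysis"
begin

definition qnum :: "real \<Rightarrow> complex \<Rightarrow> complex" where
  "qnum q c = (complex_of_real q powr c - complex_of_real q powr (- c))
                / (complex_of_real q - inverse (complex_of_real q))"

definition Lq :: "real \<Rightarrow> complex \<Rightarrow> nat \<Rightarrow> complex" where
  "Lq q \<eta> n = qnum q (1 + \<eta>) / qnum q (of_nat n + \<eta>)"

definition tcoef :: "(complex \<Rightarrow> complex) \<Rightarrow> nat \<Rightarrow> complex" where
  "tcoef f n = (deriv ^^ n) f 0 / of_nat (fact n)"

definition Jq :: "real \<Rightarrow> complex \<Rightarrow> (complex \<Rightarrow> complex) \<Rightarrow> complex \<Rightarrow> complex" where
  "Jq q \<eta> f z = z + (\<Sum>n. (if 2 \<le> n then Lq q \<eta> n * tcoef f n * z ^ n else 0))"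

definition sym_qderiv :: "real \<Rightarrow> (complex \<Rightarrow> complex) \<Rightarrow> complex \<Rightarrow> complex" where
  "sym_qderiv q F z = (if z = 0 then deriv F 0
     else (F (complex_of_real q * z) - F (z / complex_of_real q))
          / ((complex_of_real q - inverse (complex_of_real q)) * z))"

definition subordinate :: "(complex \<Rightarrow> complex) \<Rightarrow> (complex \<Rightarrow> complex) \<Rightarrow> bool" where
  "subordinate F G \<longleftrightarrow> (\<exists>h. h holomorphic_on ball 0 1 \<and> h 0 = 0 \<and>
      (\<forall>z\<in>ball 0 1. h z \<in> ball 0 1 \<and> F z = G (h z)))"

definition inverse_extension :: "(complex \<Rightarrow> complex) \<Rightarrow> (complex \<Rightarrow> complex) \<Rightarrow> bool" where
  "inverse_extension f g \<longleftrightarrow> g holomorphic_on ball 0 1 \<and> inj_on g (ball 0 1) \<and>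
      (\<forall>z\<in>ball 0 1. f z \<in> ball 0 1 \<longrightarrow> g (f z) = z)"

definition bi_univalent :: "(complex \<Rightarrow> complex) \<Rightarrow> bool" where
  "bi_univalent f \<longleftrightarrow> f holomorphic_on ball 0 1 \<and> f 0 = 0 \<and> deriv f 0 = 1 \<and>
      inj_on f (ball 0 1) \<and> (\<exists>g. inverse_extension f g)"

text \<open>The expression 2z[D_q F(z)]^lambda / (F(z) - F(-z)), given its limit value 1 at z = 0.\<close>
definition qexpr :: "real \<Rightarrow> real \<Rightarrow> (complex \<Rightarrow> complex) \<Rightarrow> complex \<Rightarrow> complex" where
  "qexpr q lam F z = (if z = 0 then 1
     else 2 * z * (sym_qderiv q F z) powr (complex_of_real lam) / (F z - F (- z)))"

definition qclass :: "real \<Rightarrow> complex \<Rightarrow> real \<Rightarrow> (complex \<Rightarrow> complex) \<Rightarrow> (complex \<Rightarrow> complex) set" where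
  "qclass q \<eta> lam \<phi> = {f. bi_univalent f \<and> (\<exists>g. inverse_extension f g \<and>
      subordinate (qexpr q lam (Jq q \<eta> f)) \<phi> \<and>
      subordinate (qexpr q lam (Jq q \<eta> g)) \<phi>)}"

end

theory Submission
  imports Defs "HOL-Complex_Analysis.Complex_Analysis"
begin

lemma qpowr: "0 < q \<Longrightarrow> complex_of_real q powr c = exp (c * of_real (ln q))"
  by (simp add: powr_def Ln_of_real)

lemma qnum_nat:
  assumes "0 < q"
  shows "qnum q (of_nat k) = of_real ((q^k - inverse (q^k)) / (q - inverse q))"
proof -
  have e1: "exp (of_nat k * complex_of_real (ln q)) = of_real (q^k)"
    using assms by (simp add: exp_of_nat_mult exp_of_real)
  have e2: "exp (- (of_nat k * complex_of_real (ln q))) = of_real (inverse (q^k))"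
    using e1 by (simp add: exp_minus)
  show ?thesis using assms
    by (simp add: qnum_def qpowr e1 e2)
qed

lemma qnum2: "0 < q \<Longrightarrow> q < 1 \<Longrightarrow> qnum q 2 = of_real (q + inverse q)"
proof -
  assume q: "0 < q" "q < 1"
  have "qnum q (of_nat 2) = of_real ((q^2 - inverse (q^2)) / (q - inverse q))"
    by (rule qnum_nat[OF q(1)])
  moreover have "(q^2 - inverse (q^2)) / (q - inverse q) = q + inverse q"
  proof -
    have "q*q < 1" using mult_strict_mono[of q 1 q 1] q by simp
    then have "q - inverse q \<noteq> 0" using q by (simp add: field_simps)
    then show ?thesis using q by (simp add: field_simps power2_eq_square)
  qed
  ultimately show ?thesis by simp
qed

lemma qnum3: "0 < q \<Longrightarrow> q < 1 \<Longrightarrow> qnum q 3 = of_real (q^2 + 1 + inverse (q^2))"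
proof -
  assume q: "0 < q" "q < 1"
  have "qnum q (of_nat 3) = of_real ((q^3 - inverse (q^3)) / (q - inverse q))"
    by (rule qnum_nat[OF q(1)])
  moreover have "(q^3 - inverse (q^3)) / (q - inverse q) = q^2 + 1 + inverse (q^2)"
  proof -
    have "q*q < 1" using mult_strict_mono[of q 1 q 1] q by simp
    then have "q - inverse q \<noteq> 0" using q by (simp add: field_simps)
    then show ?thesis using q by (simp add: field_simps power2_eq_square power3_eq_cube)
  qed
  ultimately show ?thesis by simp
qed

lemma norm_qpowr: "0 < q \<Longrightarrow> cmod (complex_of_real q powr c) = q powr Re c"
  by (subst norm_powr_real_powr) auto

lemma qnum_norm_ge:
  assumes q: "0 < q" "q < 1" and s: "Re s \<ge> 1"
  shows "cmod (qnum q s) \<ge> 1"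
proof -
  have d: "cmod (complex_of_real q - inverse (complex_of_real q)) = inverse q - q"
  proof -
    have "complex_of_real q - inverse (complex_of_real q) = of_real (q - inverse q)" by simp
    moreover have "q - inverse q < 0"
    proof -
      have "q*q < 1" using mult_strict_mono[of q 1 q 1] q by simp
      then show ?thesis using q by (simp add: field_simps)
    qed
    moreover have "cmod (complex_of_real (q - inverse q)) = abs (q - inverse q)"
      by (rule norm_of_real)
    ultimately show ?thesis by simp
  qed
  have a: "q powr Re s \<le> q" using powr_mono'[of 1 "Re s" q] q s by simp
  have b: "q powr (- Re s) \<ge> inverse q" using powr_mono'[of "- Re s" "-1" q] q s
    by (simp add: powr_minus)
  have "cmod (complex_of_real q powr (- s)) - cmod (complex_of_real q powr s) \<le>
     cmod (complex_of_real q powr s - complex_of_real q powr (- s))"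
    by (metis norm_minus_commute norm_triangle_ineq2)
  moreover have "cmod (complex_of_real q powr (- s)) - cmod (complex_of_real q powr s) = q powr (- Re s) - q powr Re s"
    using q by (simp add: norm_qpowr)
  ultimately have n: "cmod (complex_of_real q powr s - complex_of_real q powr (- s)) \<ge> inverse q - q"
    using a b by linarith
  have "q*q < 1" using mult_strict_mono[of q 1 q 1] q by simp
  then have pos: "inverse q - q > 0" using q by (simp add: field_simps)
  show ?thesis unfolding qnum_def norm_divide d
    using n pos by (simp add: field_simps)
qed

lemma qnum_nz:
  assumes q: "0 < q" "q < 1" and s: "Re s > 0"
  shows "qnum q s \<noteq> 0"
proof -
  have a: "q powr Re s < 1" using powr_less_mono'[of q 0 "Re s"] q s by simp
  have b: "q powr (- Re s) > 1" using powr_less_mono'[of q "- Re s" 0] q s by simp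
  have "complex_of_real q powr s \<noteq> complex_of_real q powr (- s)"
  proof
    assume "complex_of_real q powr s = complex_of_real q powr (- s)"
    then have "cmod (complex_of_real q powr s) = cmod (complex_of_real q powr (- s))" by simp
    then show False using a b q by (simp add: norm_qpowr)
  qed
  moreover have "complex_of_real q - inverse (complex_of_real q) \<noteq> 0"
  proof -
    have "complex_of_real q - inverse (complex_of_real q) = of_real (q - inverse q)" by simp
    moreover have "q - inverse q < 0"
    proof -
      have "q*q < 1" using mult_strict_mono[of q 1 q 1] q by simp
      then show ?thesis using q by (simp add: field_simps)
    qed
    ultimately show ?thesis by (metis of_real_eq_0_iff less_irrefl)
  qed
  ultimately show ?thesis unfolding qnum_def by simp
qed

lemma Lq_bound:
  assumes q: "0 < q" "q < 1" and e: "Re \<eta> > -1" and n: "n \<ge> 2"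
  shows "cmod (Lq q \<eta> n) \<le> cmod (qnum q (1 + \<eta>))"
proof -
  have "cmod (qnum q (of_nat n + \<eta>)) \<ge> 1"
    using qnum_norm_ge[OF q, of "of_nat n + \<eta>"] n e by simp
  then show ?thesis unfolding Lq_def norm_divide
    using mult_left_mono[of 1 "cmod (qnum q (of_nat n + \<eta>))" "cmod (qnum q (1 + \<eta>))"]
    by (simp add: divide_le_eq)
qed

lemma Lq_nz:
  assumes q: "0 < q" "q < 1" and e: "Re \<eta> > -1" and n: "n \<ge> 1"
  shows "Lq q \<eta> n \<noteq> 0"
  unfolding Lq_def using qnum_nz[OF q, of "1+\<eta>"] qnum_nz[OF q, of "of_nat n + \<eta>"] e n by simp

lemma mobius_le:
  fixes a c :: complex
  assumes a: "cmod a \<le> 1" and c: "cmod c < 1"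
  shows "cmod ((a - c) / (1 - cnj c * a)) \<le> 1"
proof -
  have ha: "Re a ^ 2 + Im a ^ 2 \<le> 1" using a
    by (metis cmod_power2 norm_ge_zero power_le_one)
  have hc: "Re c ^ 2 + Im c ^ 2 \<le> 1" using c
    by (metis cmod_power2 norm_ge_zero power_le_one less_imp_le)
  have eq: "(cmod (1 - cnj c * a))^2 - (cmod (a - c))^2
      = (1 - (Re a ^ 2 + Im a ^ 2)) * (1 - (Re c ^ 2 + Im c ^ 2))"
    unfolding cmod_power2 by (simp add: algebra_simps power2_eq_square)
  have "(cmod (a - c))^2 \<le> (cmod (1 - cnj c * a))^2"
    using eq mult_nonneg_nonneg[of "1 - (Re a ^ 2 + Im a ^ 2)" "1 - (Re c ^ 2 + Im c ^ 2)"] ha hc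
    by linarith
  then have le: "cmod (a - c) \<le> cmod (1 - cnj c * a)"
    by (rule power2_le_imp_le) simp
  have "cmod (cnj c * a) < 1"
  proof -
    have "cmod (cnj c * a) \<le> cmod c" using a by (simp add: norm_mult mult_left_le)
    then show ?thesis using c by simp
  qed
  then have "1 - cnj c * a \<noteq> 0" by (metis norm_one eq_iff_diff_eq_0 less_irrefl)
  then show ?thesis using le by (simp add: norm_divide divide_le_eq_1)
qed

lemma schwarz_coef:
  assumes hol: "h holomorphic_on ball 0 1" and h0: "h 0 = 0"
    and hb: "\<forall>z\<in>ball 0 1. h z \<in> ball 0 1"
  shows "cmod (tcoef h 1) \<le> 1 \<and> cmod (tcoef h 2) \<le> 1 - (cmod (tcoef h 1))^2"
proof -
  define Hh where "Hh = fps_expansion h 0"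
  have hexp: "h has_fps_expansion Hh"
    unfolding Hh_def by (rule has_fps_expansion_fps_expansion[OF _ _ hol]) auto
  have tc: "tcoef h n = Hh $ n" for n
    using fps_nth_fps_expansion[OF hexp, of n] by (simp add: tcoef_def)
  have no: "\<And>z. norm z < 1 \<Longrightarrow> norm (h z) < 1" using hb by auto
  note S = Schwarz_Lemma[OF hol h0 no]
  define c1 where "c1 = tcoef h 1"
  have c1d: "c1 = deriv h 0" by (simp add: tcoef_def c1_def)
  have c1b: "cmod c1 \<le> 1" using S(2)[of 0] c1d by simp
  show ?thesis
  proof (cases "cmod c1 = 1")
    case True
    then have "\<exists>\<alpha>. (\<forall>z. norm z < 1 \<longrightarrow> h z = \<alpha> * z) \<and> norm \<alpha> = 1"
      using S(3)[of 0] c1d by auto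
    then obtain \<alpha> where \<alpha>: "\<And>z. norm z < 1 \<Longrightarrow> h z = \<alpha> * z" by blast
    have ev: "eventually (\<lambda>z. (\<lambda>z. \<alpha> * z) z = h z) (nhds 0)"
      using eventually_nhds_in_open[of "ball 0 1" "0::complex"]
      by (auto elim!: eventually_mono simp: \<alpha>)
    have "(\<lambda>z. \<alpha> * z) has_fps_expansion fps_const \<alpha> * fps_X"
      by (intro fps_expansion_intros)
    then have h2: "h has_fps_expansion fps_const \<alpha> * fps_X"
      using has_fps_expansion_cong[OF ev refl] by simp
    have "tcoef h 2 = (fps_const \<alpha> * fps_X) $ 2"
      using fps_nth_fps_expansion[OF h2, of 2] by (simp add: tcoef_def)
    then have "tcoef h 2 = 0" by simp
    then show ?thesis using True c1_def by simp
  next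
    case False
    then have c1s: "cmod c1 < 1" using c1b by simp
    show ?thesis
    proof (cases "Hh = 0")
      case True
      then show ?thesis using tc c1s c1_def by simp
    next
      case False
      have Hh0: "Hh $ 0 = 0" using tc[of 0] h0 by (simp add: tcoef_def)
      have sd: "1 \<le> subdegree Hh"
        by (rule subdegree_geI[OF False]) (use Hh0 in auto)
      define k where "k z = (if z = 0 then c1 else h z / z ^ 1)" for z
      have kexp: "k has_fps_expansion fps_shift 1 Hh"
        unfolding k_def[abs_def] by (rule has_fps_expansion_shift[OF hexp sd]) (simp add: c1_def tc)
      have c2: "tcoef h 2 = deriv k 0"
        using fps_nth_fps_expansion[OF kexp, of 1] tc[of 2] by (simp add: numeral_2_eq_2)
      have kh: "k holomorphic_on ball 0 1"
        by (rule pole_theorem_open_0[OF hol, where a=0]) (auto simp: k_def c1d h0)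
      have kb: "cmod (k z) \<le> 1" if "z \<in> ball 0 1" for z
      proof (cases "z = 0")
        case True then show ?thesis using c1b by (simp add: k_def)
      next
        case False
        have "cmod (h z) \<le> cmod z" using S(1)[of z] that by simp
        then show ?thesis using False by (simp add: k_def norm_divide divide_le_eq_1)
      qed
      have k0: "k 0 = c1" by (simp add: k_def)
      have den: "1 - cnj c1 * k z \<noteq> 0" if "z \<in> ball 0 1" for z
      proof -
        have "cmod (cnj c1 * k z) \<le> cmod c1" using kb[OF that]
          by (simp add: norm_mult mult_left_le)
        then have "cmod (cnj c1 * k z) < 1" using c1s by simp
        then show ?thesis by (metis norm_one eq_iff_diff_eq_0 less_irrefl)
      qed
      define m where "m z = (k z - c1) / (1 - cnj c1 * k z)" for z
      have mh: "m holomorphic_on ball 0 1"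
        unfolding m_def[abs_def] using kh den by (intro holomorphic_intros) auto
      have mb: "cmod (m z) \<le> 1" if "z \<in> ball 0 1" for z
        unfolding m_def using mobius_le[OF kb[OF that] c1s] .
      have m0: "m 0 = 0" by (simp add: m_def k0)
      have kd: "(k has_field_derivative deriv k 0) (at 0)"
        by (rule holomorphic_derivI[OF kh]) auto
      have d0: "1 - cnj c1 * c1 = of_real (1 - (cmod c1)^2)"
        using complex_norm_square[of c1] by (simp add: mult.commute)
      have d0nz: "1 - (cmod c1)^2 > 0" using c1s by (simp add: power_less_one_iff abs_less_iff)
      have "(m has_field_derivative
          ((deriv k 0 - 0) * (1 - cnj c1 * k 0) - (k 0 - c1) * (0 - cnj c1 * deriv k 0))
            / ((1 - cnj c1 * k 0) * (1 - cnj c1 * k 0))) (at 0)"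
        unfolding m_def[abs_def]
        by (intro DERIV_divide DERIV_diff DERIV_const DERIV_cmult kd den) auto
      then have md: "deriv m 0 = deriv k 0 / of_real (1 - (cmod c1)^2)"
        using d0 d0nz by (simp add: k0 DERIV_imp_deriv)
      have tb: "t * cmod (deriv m 0) \<le> 1" if t: "0 < t" "t < 1" for t
      proof -
        have h1: "(\<lambda>z. of_real t * m z) holomorphic_on ball 0 1" using mh by (intro holomorphic_intros)
        have h2: "cmod (of_real t * m z) < 1" if "norm z < 1" for z
        proof -
          have "cmod (of_real t * m z) = t * cmod (m z)" using t by (simp add: norm_mult)
          also have "\<dots> \<le> t" using mb[of z] that t by (simp add: mult_left_le)
          finally show ?thesis using t by simp
        qed
        have "cmod (deriv (\<lambda>z. of_real t * m z) 0) \<le> 1"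
          using Schwarz_Lemma(2)[OF h1 _ h2, of 0] m0 by simp
        moreover have "deriv (\<lambda>z. of_real t * m z) 0 = of_real t * deriv m 0"
          by (rule deriv_cmult) (use mh in \<open>auto intro!: holomorphic_on_imp_differentiable_at\<close>)
        ultimately show ?thesis using t by (simp add: norm_mult)
      qed
      have mdb: "cmod (deriv m 0) \<le> 1"
      proof (rule ccontr)
        assume "\<not> ?thesis"
        then have g: "cmod (deriv m 0) > 1" by simp
        define iv where "iv = inverse (cmod (deriv m 0))"
        define t where "t = (1 + iv) / 2"
        have i1: "iv < 1" using g unfolding iv_def by (simp add: inverse_less_1_iff)
        have i2: "iv > 0" using g unfolding iv_def by (metis inverse_positive_iff_positive less_trans zero_less_one)
        have t1: "0 < t" "t < 1" unfolding t_def using i1 i2 by simp_all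
        have "t * cmod (deriv m 0) = (cmod (deriv m 0) + 1) / 2"
        proof -
          have nz: "deriv m 0 \<noteq> 0" using g by (cases "deriv m 0 = 0") auto
          then show ?thesis unfolding t_def iv_def by (simp add: field_simps)
        qed
        then have "t * cmod (deriv m 0) > 1" using g by simp
        then show False using tb[OF t1] by simp
      qed
      obtain D where D: "D = 1 - (cmod c1)^2" by simp
      have D0: "D > 0" using D d0nz by simp
      have md': "deriv m 0 = deriv k 0 / of_real D" using md D by simp
      have md'': "deriv k 0 = deriv m 0 * of_real D" using md' D0 by (simp add: field_simps)
      have "cmod (tcoef h 2) = cmod (deriv m 0) * D"
        using c2 md'' D0 by (simp add: norm_mult)
      also have "\<dots> = cmod (deriv m 0) * (1 - (cmod c1)^2)" using D by simp
      also have "\<dots> \<le> 1 - (cmod c1)^2" using mdb d0nz by (simp add: mult_left_le_one_le)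
      finally show ?thesis using c1b c1_def by simp
    qed
  qed
qed

lemma fps_exp_unique:
  fixes f :: "complex \<Rightarrow> complex"
  assumes "f has_fps_expansion F" "f has_fps_expansion G"
  shows "F = G"
proof (rule fps_ext)
  fix n show "F $ n = G $ n"
    using fps_nth_fps_expansion[OF assms(1), of n] fps_nth_fps_expansion[OF assms(2), of n] by simp
qed

lemma tcoef_exp:
  assumes "f has_fps_expansion F"
  shows "tcoef f n = F $ n"
  using fps_nth_fps_expansion[OF assms, of n] by (simp add: tcoef_def)

lemma hol_exp:
  assumes "f holomorphic_on ball 0 1"
  shows "f has_fps_expansion fps_expansion f 0"
  by (rule has_fps_expansion_fps_expansion[OF _ _ assms]) auto

lemma ev_nz:
  fixes g :: "complex \<Rightarrow> complex"
  assumes "g has_fps_expansion G" "g 0 \<noteq> 0"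
  shows "eventually (\<lambda>x. g x \<noteq> 0) (nhds 0)"
proof -
  have "isCont g 0" using has_fps_expansion_imp_continuous[OF assms(1), of UNIV] by simp
  then have "(g \<longlongrightarrow> g 0) (at 0)" by (simp add: isCont_def)
  then have "eventually (\<lambda>x. g x \<noteq> 0) (at 0)"
    using tendsto_imp_eventually_ne assms(2) by blast
  then show ?thesis using assms(2) by (simp add: eventually_nhds_conv_at)
qed

definition JA :: "real \<Rightarrow> complex \<Rightarrow> (complex \<Rightarrow> complex) \<Rightarrow> complex fps" where
  "JA q \<eta> f = Abs_fps (\<lambda>n. if n = 0 then 0 else if n = 1 then 1 else Lq q \<eta> n * tcoef f n)"

lemma JA_nth: "JA q \<eta> f $ 0 = 0" "JA q \<eta> f $ 1 = 1" "JA q \<eta> f $ 2 = Lq q \<eta> 2 * tcoef f 2"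
   "JA q \<eta> f $ 3 = Lq q \<eta> 3 * tcoef f 3"
  by (simp_all add: JA_def)

lemma jq_exp:
  assumes q: "0 < q" "q < 1" and e: "Re \<eta> > -1"
    and hol: "f holomorphic_on ball 0 1" and f1: "deriv f 0 = 1"
  shows "Jq q \<eta> f has_fps_expansion JA q \<eta> f"
proof -
  define A where "A = JA q \<eta> f"
  define \<Phi> where "\<Phi> = fps_expansion f 0"
  have fexp: "f has_fps_expansion \<Phi>" unfolding \<Phi>_def by (rule hol_exp[OF hol])
  have tc: "tcoef f n = \<Phi> $ n" for n by (rule tcoef_exp[OF fexp])
  define C where "C = cmod (qnum q (1 + \<eta>))"
  have bnd: "cmod (A $ n) \<le> (1 + C) * cmod (\<Phi> $ n)" for n
  proof -
    have C0: "C \<ge> 0" by (simp add: C_def)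
    consider "n = 0" | "n = 1" | "n \<ge> 2" by linarith
    then show ?thesis
    proof cases
      case 1 then show ?thesis using C0 by (simp add: A_def JA_def)
    next
      case 2
      have "\<Phi> $ 1 = 1" using tc[of 1] f1 by (simp add: tcoef_def)
      then show ?thesis using 2 C0 by (simp add: A_def JA_def)
    next
      case 3
      have "cmod (Lq q \<eta> n) \<le> C" unfolding C_def by (rule Lq_bound[OF q e 3])
      then have "cmod (Lq q \<eta> n) * cmod (\<Phi> $ n) \<le> (1 + C) * cmod (\<Phi> $ n)"
        by (intro mult_right_mono) auto
      then show ?thesis using 3 by (simp add: A_def JA_def tc norm_mult)
    qed
  qed
  have "fps_conv_radius \<Phi> > 0" using fexp by (simp add: has_fps_expansion_def)
  then obtain r where r: "0 < ereal r" "ereal r < fps_conv_radius \<Phi>"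
    using ereal_dense2 by (metis zero_ereal_def)
  then have r0: "r > 0" by simp
  have sPhi: "summable (\<lambda>n. norm (\<Phi> $ n * of_real r ^ n))"
    by (rule norm_summable_fps) (use r r0 in simp)
  have sA: "summable (\<lambda>n. A $ n * z ^ n)" if z: "norm z \<le> r" for z
  proof (rule summable_norm_cancel, rule summable_comparison_test[OF _ summable_mult[OF sPhi, of "1 + C"]])
    show "\<exists>N. \<forall>n\<ge>N. norm (norm (A $ n * z ^ n)) \<le> (1 + C) * norm (\<Phi> $ n * of_real r ^ n)"
    proof (intro exI allI impI)
      fix n :: nat
      have C0: "C \<ge> 0" by (simp add: C_def)
      have zn: "norm z ^ n \<le> r ^ n" using z by (simp add: power_mono)
      have "norm (norm (A $ n * z ^ n)) = cmod (A $ n) * norm z ^ n" by (simp add: norm_mult norm_power)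
      also have "\<dots> \<le> (1 + C) * cmod (\<Phi> $ n) * r ^ n"
        using mult_mono[OF bnd[of n] zn] C0 by simp
      also have "\<dots> = (1 + C) * norm (\<Phi> $ n * of_real r ^ n)" using r0 by (simp add: norm_mult norm_power)
      finally show "norm (norm (A $ n * z ^ n)) \<le> (1 + C) * norm (\<Phi> $ n * of_real r ^ n)" .
    qed
  qed
  have rad: "fps_conv_radius A > 0"
  proof -
    have "conv_radius (fps_nth A) \<ge> norm (of_real r :: complex)"
      by (rule conv_radius_geI) (use sA[of "of_real r"] r0 in simp)
    then show ?thesis using r0 by (simp add: fps_conv_radius_def) (meson ereal_less(2) order_less_le_trans)
  qed
  have eq: "eval_fps A z = Jq q \<eta> f z" if z: "z \<in> ball 0 r" for z
  proof -
    define T where "T n = (if 2 \<le> n then Lq q \<eta> n * tcoef f n * z ^ n else 0)" for n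
    define S where "S n = (if n = 1 then z else 0)" for n :: nat
    have split: "A $ n * z ^ n = S n + T n" for n
      by (cases "n = 0"; cases "n = 1") (auto simp: A_def JA_def S_def T_def)
    have sS: "S sums z" unfolding S_def using sums_single[of 1 "\<lambda>_. z"] by simp
    have sAz: "summable (\<lambda>n. A $ n * z ^ n)" using z by (intro sA) (simp add: dist_norm)
    have sT: "summable T"
    proof -
      have "summable (\<lambda>n. A $ n * z ^ n - S n)" using sAz sS by (intro summable_diff) (auto simp: sums_iff)
      then show ?thesis by (simp add: split)
    qed
    have "eval_fps A z = (\<Sum>n. S n + T n)" unfolding eval_fps_def split ..
    also have "\<dots> = (\<Sum>n. S n) + (\<Sum>n. T n)" using sS sT by (intro suminf_add[symmetric]) (auto simp: sums_iff)
    also have "\<dots> = z + (\<Sum>n. T n)" using sS by (simp add: sums_iff)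
    finally show ?thesis unfolding Jq_def T_def by simp
  qed
  have "eventually (\<lambda>z. z \<in> ball 0 r) (nhds (0::complex))"
    using r0 by (intro eventually_nhds_in_open) auto
  then have "eventually (\<lambda>z. eval_fps A z = Jq q \<eta> f z) (nhds 0)"
    by (rule eventually_mono) (use eq in auto)
  then show ?thesis using rad unfolding A_def has_fps_expansion_def by simp
qed

lemma compose_nth123:
  fixes F G :: "complex fps"
  assumes "fps_nth G 0 = 0"
  shows "fps_nth (F oo G) 1 = fps_nth F 1 * fps_nth G 1"
    "fps_nth (F oo G) 2 = fps_nth F 1 * fps_nth G 2 + fps_nth F 2 * (fps_nth G 1)^2"
    "fps_nth (F oo G) 3 = fps_nth F 1 * fps_nth G 3 + 2 * fps_nth F 2 * fps_nth G 1 * fps_nth G 2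
        + fps_nth F 3 * (fps_nth G 1)^3"
  using assms
  by (simp_all add: fps_compose_nth numeral_3_eq_3 numeral_2_eq_2 fps_mult_nth
      atLeast0AtMost atMost_Suc power2_eq_square power3_eq_cube algebra_simps)

lemma mult_nth12:
  fixes F G :: "complex fps"
  shows "fps_nth (F * G) 1 = fps_nth F 0 * fps_nth G 1 + fps_nth F 1 * fps_nth G 0"
    "fps_nth (F * G) 2 = fps_nth F 0 * fps_nth G 2 + fps_nth F 1 * fps_nth G 1 + fps_nth F 2 * fps_nth G 0"
  by (simp_all add: fps_mult_nth numeral_2_eq_2 atLeast0AtMost atMost_Suc)

lemma gchoose2: "(a::complex) gchoose 2 = a * (a - 1) / 2"
  by (simp add: gbinomial_Suc numeral_2_eq_2 atLeast0AtMost atMost_Suc)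

lemma side:
  assumes q: "0 < q" "q < 1" and e: "Re \<eta> > -1"
    and hol: "f holomorphic_on ball 0 1" and f0: "f 0 = 0" and f1: "deriv f 0 = 1"
    and phol: "\<phi> holomorphic_on ball 0 1" and p0: "\<phi> 0 = 1"
    and sub: "subordinate (qexpr q lam (Jq q \<eta> f)) \<phi>"
  shows "\<exists>c1 c2. cmod c1 \<le> 1 \<and> cmod c2 \<le> 1 - (cmod c1)^2 \<and>
     tcoef \<phi> 1 * c1 = of_real lam * qnum q 2 * (Lq q \<eta> 2 * tcoef f 2) \<and>
     tcoef \<phi> 1 * c2 + tcoef \<phi> 2 * c1^2 + Lq q \<eta> 3 * tcoef f 3 =
       of_real lam * qnum q 3 * (Lq q \<eta> 3 * tcoef f 3)
       + of_real lam * (of_real lam - 1) / 2 * (qnum q 2)^2 * (Lq q \<eta> 2 * tcoef f 2)^2"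
proof -
  obtain h where hh: "h holomorphic_on ball 0 1" and h0: "h 0 = 0"
    and hb: "\<And>z. z \<in> ball 0 1 \<Longrightarrow> h z \<in> ball 0 1"
    and heq: "\<And>z. z \<in> ball 0 1 \<Longrightarrow> qexpr q lam (Jq q \<eta> f) z = \<phi> (h z)"
    using sub unfolding subordinate_def by blast
  define c1 where "c1 = tcoef h 1"
  define c2 where "c2 = tcoef h 2"
  have sc: "cmod c1 \<le> 1 \<and> cmod c2 \<le> 1 - (cmod c1)^2"
    unfolding c1_def c2_def by (rule schwarz_coef[OF hh h0]) (use hb in auto)
  define F where "F = Jq q \<eta> f"
  define A where "A = JA q \<eta> f"
  have Fexp: "F has_fps_expansion A" unfolding F_def A_def by (rule jq_exp[OF q e hol f1])
  have A0: "A $ 0 = 0" and A1: "A $ 1 = 1" and A2: "A $ 2 = Lq q \<eta> 2 * tcoef f 2"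
    and A3: "A $ 3 = Lq q \<eta> 3 * tcoef f 3" unfolding A_def by (rule JA_nth)+
  have dF: "deriv F 0 = 1" using fps_nth_fps_expansion[OF Fexp, of 1] A1 by simp
  have mexp: "(\<lambda>x::complex. - x) has_fps_expansion - fps_X"
    by (intro fps_expansion_intros)
  have Fm: "(\<lambda>x. F (- x)) has_fps_expansion (A oo - fps_X)"
    using has_fps_expansion_compose[OF Fexp mexp] by (simp add: o_def)
  define AD where "AD = fps_const (1/2) * (A - (A oo - fps_X))"
  have Dexp: "(\<lambda>x. (F x - F (- x)) / 2) has_fps_expansion AD"
  proof -
    have "(\<lambda>x. (1/2) * (F x - F (- x))) has_fps_expansion AD"
      unfolding AD_def by (intro has_fps_expansion_cmult_left has_fps_expansion_diff Fexp Fm)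
    then show ?thesis by simp
  qed
  have ADn: "AD $ n = (A $ n - (-1)^n * A $ n) / 2" for n
    by (simp add: AD_def fps_compose_uminus')
  have AD0: "AD $ 0 = 0" using ADn[of 0] by simp
  have AD1: "AD $ 1 = 1" using ADn[of 1] A1 by simp
  have ADnz: "AD \<noteq> 0" using AD1 by auto
  have sdD: "1 \<le> subdegree AD" by (rule subdegree_geI[OF ADnz]) (use AD0 in auto)
  define HH where "HH x = (if x = 0 then 1 else ((F x - F (- x)) / 2) / x ^ 1)" for x
  define AH where "AH = fps_shift 1 AD"
  have Hexp: "HH has_fps_expansion AH"
    unfolding HH_def[abs_def] AH_def by (rule has_fps_expansion_shift[OF Dexp sdD]) (use AD1 in simp)
  have AH0: "AH $ 0 = 1" and AH1: "AH $ 1 = 0" and AH2: "AH $ 2 = A $ 3"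
    using ADn[of 1] ADn[of 2] ADn[of 3] A1 unfolding AH_def by (simp_all add: numeral_3_eq_3 numeral_2_eq_2)
  define c where "c = complex_of_real q"
  have cnz: "c \<noteq> 0" using q by (simp add: c_def)
  have cc: "c - inverse c \<noteq> 0"
  proof -
    have "q * q < 1" using mult_strict_mono[of q 1 q 1] q by simp
    then have "q - inverse q \<noteq> 0" using q by (simp add: field_simps)
    then show ?thesis unfolding c_def by (metis of_real_eq_0_iff of_real_diff of_real_inverse)
  qed
  have lin: "(\<lambda>x. d * x) has_fps_expansion fps_const d * fps_X" for d :: complex
    by (intro fps_expansion_intros)
  have Fq: "(\<lambda>x. F (c * x)) has_fps_expansion (A oo (fps_const c * fps_X))"
    using has_fps_expansion_compose[OF Fexp lin[of c]] by (simp add: o_def)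
  have Fqi: "(\<lambda>x. F (inverse c * x)) has_fps_expansion (A oo (fps_const (inverse c) * fps_X))"
    using has_fps_expansion_compose[OF Fexp lin[of "inverse c"]] by (simp add: o_def)
  define AKd where "AKd = fps_const (1 / (c - inverse c)) *
      ((A oo (fps_const c * fps_X)) - (A oo (fps_const (inverse c) * fps_X)))"
  have Kdexp: "(\<lambda>x. (1 / (c - inverse c)) * (F (c * x) - F (inverse c * x))) has_fps_expansion AKd"
    unfolding AKd_def by (intro has_fps_expansion_cmult_left has_fps_expansion_diff Fq Fqi)
  have qc: "qnum q (of_nat k) = (c ^ k - inverse c ^ k) / (c - inverse c)" for k
    using qnum_nat[OF q(1), of k] by (simp add: c_def power_inverse)
  have AKdn: "AKd $ k = qnum q (of_nat k) * A $ k" for k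
    unfolding qc AKd_def using cc by (simp add: fps_nth_compose_linear) (simp add: field_simps)
  have AKd0: "AKd $ 0 = 0" using AKdn[of 0] A0 by simp
  have AKd1: "AKd $ 1 = 1" using AKdn[of 1] A1 qc[of 1] cc by simp
  have AKdnz: "AKd \<noteq> 0" using AKd1 by auto
  have sdK: "1 \<le> subdegree AKd" by (rule subdegree_geI[OF AKdnz]) (use AKd0 in auto)
  define Ks where "Ks x = (if x = 0 then 1 else
       ((1 / (c - inverse c)) * (F (c * x) - F (inverse c * x))) / x ^ 1)" for x
  define AK where "AK = fps_shift 1 AKd"
  have Kexp: "Ks has_fps_expansion AK"
    unfolding Ks_def[abs_def] AK_def by (rule has_fps_expansion_shift[OF Kdexp sdK]) (use AKd1 in simp)
  have AK0: "AK $ 0 = 1" using AKd1 by (simp add: AK_def)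
  have AK1: "AK $ 1 = qnum q 2 * A $ 2" using AKdn[of 2] by (simp add: AK_def numeral_2_eq_2)
  have AK2: "AK $ 2 = qnum q 3 * A $ 3" using AKdn[of 3] by (simp add: AK_def numeral_3_eq_3 numeral_2_eq_2)
  have symK: "sym_qderiv q F x = Ks x" for x
  proof (cases "x = 0")
    case True then show ?thesis using dF by (simp add: sym_qderiv_def Ks_def)
  next
    case False
    then show ?thesis using cc cnz
      by (simp add: sym_qderiv_def Ks_def c_def[symmetric] divide_inverse mult.commute mult.left_commute)
  qed
  have Km: "(\<lambda>x. Ks x - 1) has_fps_expansion AK - 1" by (intro fps_expansion_intros Kexp)
  have Km0: "(AK - 1) $ 0 = 0" using AK0 by simp
  have Bexp: "(\<lambda>x. Ks x powr of_real lam) has_fps_expansion (fps_binomial (of_real lam) oo (AK - 1))"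
    using has_fps_expansion_compose[OF has_fps_expansion_binomial_complex Km Km0] by (simp add: o_def)
  define \<Phi> where "\<Phi> = fps_expansion \<phi> 0"
  define Hh where "Hh = fps_expansion h 0"
  have pexp: "\<phi> has_fps_expansion \<Phi>" unfolding \<Phi>_def by (rule hol_exp[OF phol])
  have hexp: "h has_fps_expansion Hh" unfolding Hh_def by (rule hol_exp[OF hh])
  have Hh0: "Hh $ 0 = 0" using tcoef_exp[OF hexp, of 0] h0 by (simp add: tcoef_def)
  have Pexp: "(\<lambda>x. \<phi> (h x)) has_fps_expansion (\<Phi> oo Hh)"
    using has_fps_expansion_compose[OF pexp hexp Hh0] by (simp add: o_def)
  have PHexp: "(\<lambda>x. \<phi> (h x) * HH x) has_fps_expansion (\<Phi> oo Hh) * AH"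
    by (rule has_fps_expansion_mult[OF Pexp Hexp])
  have ev1: "eventually (\<lambda>x. x \<in> ball 0 1) (nhds (0::complex))"
    by (intro eventually_nhds_in_open) auto
  have ev2: "eventually (\<lambda>x. HH x \<noteq> 0) (nhds 0)"
    by (rule ev_nz[OF Hexp]) (simp add: HH_def)
  have ev: "eventually (\<lambda>x. \<phi> (h x) * HH x = Ks x powr of_real lam) (nhds 0)"
    using ev1 ev2
  proof eventually_elim
    case (elim x)
    show ?case
    proof (cases "x = 0")
      case True
      then show ?thesis using h0 p0 by (simp add: HH_def Ks_def)
    next
      case False
      have "\<phi> (h x) = qexpr q lam F x" using heq[OF elim(1)] by (simp add: F_def)
      also have "\<dots> = 2 * x * Ks x powr of_real lam / (F x - F (- x))"
        using False by (simp add: qexpr_def symK)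
      finally have ph: "\<phi> (h x) = 2 * x * Ks x powr of_real lam / (F x - F (- x))" .
      have "F x - F (- x) \<noteq> 0" using elim(2) False by (simp add: HH_def)
      then show ?thesis using False by (simp add: ph HH_def)
    qed
  qed
  have PHexp': "(\<lambda>x. Ks x powr of_real lam) has_fps_expansion (\<Phi> oo Hh) * AH"
    using has_fps_expansion_cong[OF ev refl] PHexp by simp
  have U: "(\<Phi> oo Hh) * AH = fps_binomial (of_real lam) oo (AK - 1)"
    by (rule fps_exp_unique[OF PHexp' Bexp])
  have P0: "\<Phi> $ 0 = 1" using tcoef_exp[OF pexp, of 0] p0 by (simp add: tcoef_def)
  have P1: "\<Phi> $ 1 = tcoef \<phi> 1" and P2: "\<Phi> $ 2 = tcoef \<phi> 2" using tcoef_exp[OF pexp] by simp_all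
  have H1: "Hh $ 1 = c1" and H2: "Hh $ 2 = c2" using tcoef_exp[OF hexp] by (simp_all add: c1_def c2_def)
  have e1: "fps_nth ((\<Phi> oo Hh) * AH) 1 = fps_nth (fps_binomial (of_real lam) oo (AK - 1)) 1"
    and e2: "fps_nth ((\<Phi> oo Hh) * AH) 2 = fps_nth (fps_binomial (of_real lam) oo (AK - 1)) 2"
    using U by simp_all
  note cn1 = compose_nth123[OF Hh0, of \<Phi>] and cn2 = compose_nth123[OF Km0, of "fps_binomial (of_real lam)"]
  have E1: "tcoef \<phi> 1 * c1 = of_real lam * (qnum q 2 * A $ 2)"
    using e1 unfolding mult_nth12 cn1 cn2 by (simp add: P0 P1 H1 AH0 AH1 AK1 P1[unfolded One_nat_def]
      H1[unfolded One_nat_def] AH1[unfolded One_nat_def] AK1[unfolded One_nat_def])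
  have E2: "tcoef \<phi> 1 * c2 + tcoef \<phi> 2 * c1^2 + A $ 3 =
      of_real lam * (qnum q 3 * A $ 3) + of_real lam * (of_real lam - 1) / 2 * (qnum q 2 * A $ 2)^2"
    using e2 unfolding mult_nth12 cn1 cn2 by (simp add: P0 P1 P2 H1 H2 AH0 AH1 AH2 AK1 AK2 gchoose2 P1[unfolded One_nat_def]
      H1[unfolded One_nat_def] AH1[unfolded One_nat_def] AK1[unfolded One_nat_def] add.commute)
  show ?thesis
    by (rule exI[of _ c1], rule exI[of _ c2]) (use sc E1 E2 A2 A3 in \<open>simp add: power_mult_distrib algebra_simps\<close>)
qed

lemma alg_main:
  fixes E1 E2 c1 c2 d1 d2 a2 a3 l Q2 Q3 L2 L3 :: complex
  assumes f1: "E1 * c1 = l * Q2 * (L2 * a2)"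
    and f2: "E1 * c2 + E2 * c1^2 + L3 * a3 = l * Q3 * (L3 * a3) + l * (l - 1) / 2 * Q2^2 * (L2 * a2)^2"
    and g1: "E1 * d1 = l * Q2 * (L2 * (- a2))"
    and g2: "E1 * d2 + E2 * d1^2 + L3 * (2 * a2^2 - a3) = l * Q3 * (L3 * (2 * a2^2 - a3))
        + l * (l - 1) / 2 * Q2^2 * (L2 * (- a2))^2"
    and E1: "E1 \<noteq> 0"
  shows "(2 * (l * Q3 - 1) * L3 + l * (l - 1) * Q2^2 * L2^2) * a2^2
           = E1 * (c2 + c1^2) + E1 * (d2 + d1^2) + (E2 - E1) * (c1^2 + d1^2)"
    and "(2 * (l * Q3 - 1) * E1^2 * L3 + l * ((l - 1) * E1^2 + 2 * l * (E1 - E2)) * Q2^2 * L2^2) * a2^2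
           = E1^3 * ((c2 + c1^2) + (d2 + d1^2))"
    and "2 * (l * Q3 - 1) * L3 * (a3 - a2^2) = E1 * (c2 - d2)"
proof -
  have f2': "2 * (E1 * c2 + E2 * c1^2 + L3 * a3) = 2 * (l * Q3 * (L3 * a3)) + l * (l - 1) * Q2^2 * (L2 * a2)^2"
    using arg_cong[OF f2, of "\<lambda>x. 2 * x"] by (simp add: distrib_left)
  have g2': "2 * (E1 * d2 + E2 * d1^2 + L3 * (2 * a2^2 - a3)) = 2 * (l * Q3 * (L3 * (2 * a2^2 - a3)))
        + l * (l - 1) * Q2^2 * (L2 * (- a2))^2"
    using arg_cong[OF g2, of "\<lambda>x. 2 * x"] by (simp add: distrib_left)
  have "E1 * (c1 + d1) = 0" using f1 g1 by (simp add: algebra_simps)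
  then have d1: "d1 = - c1" using E1 by (simp add: add_eq_0_iff)
  show "(2 * (l * Q3 - 1) * L3 + l * (l - 1) * Q2^2 * L2^2) * a2^2
           = E1 * (c2 + c1^2) + E1 * (d2 + d1^2) + (E2 - E1) * (c1^2 + d1^2)"
    using f2' g2' by algebra
  show "(2 * (l * Q3 - 1) * E1^2 * L3 + l * ((l - 1) * E1^2 + 2 * l * (E1 - E2)) * Q2^2 * L2^2) * a2^2
           = E1^3 * ((c2 + c1^2) + (d2 + d1^2))"
    using f1 g1 f2' g2' by algebra
  show "2 * (l * Q3 - 1) * L3 * (a3 - a2^2) = E1 * (c2 - d2)"
    using f2' g2' d1 by algebra
qed

lemma inv_coef:
  assumes hol: "f holomorphic_on ball 0 1" and f0: "f 0 = 0" and f1: "deriv f 0 = 1"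
    and ie: "inverse_extension f g"
  shows "g holomorphic_on ball 0 1" "g 0 = 0" "deriv g 0 = 1"
    "tcoef g 2 = - tcoef f 2" "tcoef g 3 = 2 * (tcoef f 2)^2 - tcoef f 3"
proof -
  have ghol: "g holomorphic_on ball 0 1" and gf: "\<And>z. z \<in> ball 0 1 \<Longrightarrow> f z \<in> ball 0 1 \<Longrightarrow> g (f z) = z"
    using ie unfolding inverse_extension_def by auto
  show "g holomorphic_on ball 0 1" by (rule ghol)
  show g0: "g 0 = 0" using gf[of 0] f0 by simp
  define Ff where "Ff = fps_expansion f 0"
  define Gg where "Gg = fps_expansion g 0"
  have fexp: "f has_fps_expansion Ff" unfolding Ff_def by (rule hol_exp[OF hol])
  have gexp: "g has_fps_expansion Gg" unfolding Gg_def by (rule hol_exp[OF ghol])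
  have F0: "Ff $ 0 = 0" using tcoef_exp[OF fexp, of 0] f0 by (simp add: tcoef_def)
  have F1: "Ff $ 1 = 1" using tcoef_exp[OF fexp, of 1] f1 by (simp add: tcoef_def)
  have comp: "(\<lambda>x. g (f x)) has_fps_expansion (Gg oo Ff)"
    using has_fps_expansion_compose[OF gexp fexp F0] by (simp add: o_def)
  have "isCont f 0" using has_fps_expansion_imp_continuous[OF fexp, of UNIV] by simp
  then have "(f \<longlongrightarrow> 0) (at 0)" using f0 by (simp add: isCont_def)
  then have "eventually (\<lambda>x. f x \<in> ball 0 1) (at 0)"
    by (rule topological_tendstoD) auto
  then have ev1: "eventually (\<lambda>x. f x \<in> ball 0 1) (nhds 0)"
    using f0 by (simp add: eventually_nhds_conv_at)
  have ev2: "eventually (\<lambda>x. x \<in> ball 0 1) (nhds (0::complex))"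
    by (intro eventually_nhds_in_open) auto
  have ev: "eventually (\<lambda>x. g (f x) = x) (nhds 0)"
    using ev1 ev2 by eventually_elim (simp add: gf)
  have "(\<lambda>x. x) has_fps_expansion fps_X" by (intro fps_expansion_intros)
  then have "(\<lambda>x. g (f x)) has_fps_expansion fps_X"
    using has_fps_expansion_cong[OF ev refl] by simp
  then have U: "Gg oo Ff = fps_X" using fps_exp_unique[OF comp] by simp
  note cn = compose_nth123[OF F0, of Gg]
  have e1: "Gg $ 1 * Ff $ 1 = 1" using arg_cong[OF U, of "\<lambda>A. fps_nth A 1"] cn(1) by simp
  have e2: "Gg $ 1 * Ff $ 2 + Gg $ 2 * (Ff $ 1)^2 = 0" using arg_cong[OF U, of "\<lambda>A. fps_nth A 2"] cn(2) by simp
  have e3: "Gg $ 1 * Ff $ 3 + 2 * Gg $ 2 * Ff $ 1 * Ff $ 2 + Gg $ 3 * (Ff $ 1)^3 = 0"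
    using arg_cong[OF U, of "\<lambda>A. fps_nth A 3"] cn(3) by simp
  have G1: "Gg $ 1 = 1" using e1 F1 by simp
  have G2: "Gg $ 2 = - Ff $ 2" using e2 F1 G1 by (simp add: add_eq_0_iff)
  have G3: "Gg $ 3 = 2 * (Ff $ 2)^2 - Ff $ 3" using e3 F1 G1 G2
    by (simp add: algebra_simps power2_eq_square)
  show "deriv g 0 = 1" using tcoef_exp[OF gexp, of 1] G1 by (simp add: tcoef_def)
  show "tcoef g 2 = - tcoef f 2" using tcoef_exp[OF gexp, of 2] tcoef_exp[OF fexp, of 2] G2 by simp
  show "tcoef g 3 = 2 * (tcoef f 2)^2 - tcoef f 3"
    using tcoef_exp[OF gexp, of 3] tcoef_exp[OF fexp, of 3] tcoef_exp[OF fexp, of 2] G3 by simp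
qed

theorem corollary1:
  fixes q lam E1 :: real and \<eta> E2 \<Gamma> \<Xi> :: complex
    and \<phi> f :: "complex \<Rightarrow> complex"
  assumes "0 < q" "q < 1" "Re \<eta> > -1" "lam \<ge> 1"
    and "\<phi> holomorphic_on ball 0 1" "\<forall>z\<in>ball 0 1. Re (\<phi> z) > 0" "\<phi> 0 = 1"
    and "tcoef \<phi> 1 = complex_of_real E1" "E1 > 0" "tcoef \<phi> 2 = E2"
    and "\<Gamma> = 2 * (of_real lam * qnum q 3 - 1) * Lq q \<eta> 3
             + of_real lam * (of_real lam - 1) * (qnum q 2)\<^sup>2 * (Lq q \<eta> 2)\<^sup>2"
    and "\<Xi> = 2 * (of_real lam * qnum q 3 - 1) * (of_real E1)\<^sup>2 * Lq q \<eta> 3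
             + of_real lam * ((of_real lam - 1) * (of_real E1)\<^sup>2 + 2 * of_real lam * (of_real E1 - E2))
               * (qnum q 2)\<^sup>2 * (Lq q \<eta> 2)\<^sup>2"
    and "\<Gamma> \<noteq> 0" "\<Xi> \<noteq> 0"
    and "f \<in> qclass q \<eta> lam \<phi>"
  shows "(cmod (tcoef f 2) \<le> min (E1 / (lam * cmod (Lq q \<eta> 2) * Re (qnum q 2)))
            (min (sqrt (2 * (cmod (E2 - of_real E1) + E1) / cmod \<Gamma>))
                 (E1 * sqrt (2 * E1) / sqrt (cmod \<Xi>)))) \<and>
         cmod (tcoef f 3) \<le> E1 / ((lam * Re (qnum q 3) - 1) * cmod (Lq q \<eta> 3))
            + min (E1\<^sup>2 / (lam\<^sup>2 * (Re (qnum q 2))\<^sup>2 * (cmod (Lq q \<eta> 2))\<^sup>2))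
                  (2 * (cmod (E2 - of_real E1) + E1) / cmod \<Gamma>)"
proof -
  note q = assms(1,2) and e = assms(3) and lam = assms(4) and phol = assms(5) and p0 = assms(7)
  note t1 = assms(8) and E1p = assms(9) and t2 = assms(10) and Gd = assms(11) and Xd = assms(12)
  note Gnz = assms(13) and Xnz = assms(14)
  obtain g where bf: "bi_univalent f" and ie: "inverse_extension f g"
    and sf: "subordinate (qexpr q lam (Jq q \<eta> f)) \<phi>"
    and sg: "subordinate (qexpr q lam (Jq q \<eta> g)) \<phi>"
    using assms(15) unfolding qclass_def by blast
  have hol: "f holomorphic_on ball 0 1" and f0: "f 0 = 0" and f1: "deriv f 0 = 1"
    using bf unfolding bi_univalent_def by auto
  note gi = inv_coef[OF hol f0 f1 ie]
  define a2 where "a2 = tcoef f 2"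
  define a3 where "a3 = tcoef f 3"
  define L2 where "L2 = Lq q \<eta> 2"
  define L3 where "L3 = Lq q \<eta> 3"
  define Q2r where "Q2r = q + inverse q"
  define Q3r where "Q3r = q^2 + 1 + inverse (q^2)"
  have Q2: "qnum q 2 = of_real Q2r" unfolding Q2r_def by (rule qnum2[OF q])
  have Q3: "qnum q 3 = of_real Q3r" unfolding Q3r_def by (rule qnum3[OF q])
  have iq: "inverse q > 0" "inverse (q^2) > 0" "q^2 > 0" using q by simp_all
  have Q2p: "Q2r > 0" using q iq unfolding Q2r_def by linarith
  have Q3g: "Q3r > 1" using iq unfolding Q3r_def by linarith
  have lQ3: "lam * Q3r - 1 > 0"
  proof -
    have "lam * Q3r \<ge> 1 * Q3r" using lam Q3g by (intro mult_right_mono) auto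
    then show ?thesis using Q3g by linarith
  qed
  have L2nz: "L2 \<noteq> 0" unfolding L2_def by (rule Lq_nz[OF q e]) simp
  have L3nz: "L3 \<noteq> 0" unfolding L3_def by (rule Lq_nz[OF q e]) simp
  obtain c1 c2 where c: "cmod c1 \<le> 1" "cmod c2 \<le> 1 - (cmod c1)^2"
    and cf1: "tcoef \<phi> 1 * c1 = of_real lam * qnum q 2 * (Lq q \<eta> 2 * tcoef f 2)"
    and cf2: "tcoef \<phi> 1 * c2 + tcoef \<phi> 2 * c1^2 + Lq q \<eta> 3 * tcoef f 3 =
       of_real lam * qnum q 3 * (Lq q \<eta> 3 * tcoef f 3)
       + of_real lam * (of_real lam - 1) / 2 * (qnum q 2)^2 * (Lq q \<eta> 2 * tcoef f 2)^2"
    using side[OF q e hol f0 f1 phol p0 sf] by blast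
  obtain d1 d2 where d: "cmod d1 \<le> 1" "cmod d2 \<le> 1 - (cmod d1)^2"
    and df1: "tcoef \<phi> 1 * d1 = of_real lam * qnum q 2 * (Lq q \<eta> 2 * tcoef g 2)"
    and df2: "tcoef \<phi> 1 * d2 + tcoef \<phi> 2 * d1^2 + Lq q \<eta> 3 * tcoef g 3 =
       of_real lam * qnum q 3 * (Lq q \<eta> 3 * tcoef g 3)
       + of_real lam * (of_real lam - 1) / 2 * (qnum q 2)^2 * (Lq q \<eta> 2 * tcoef g 2)^2"
    using side[OF q e gi(1) gi(2) gi(3) phol p0 sg] by blast
  define E1c where "E1c = complex_of_real E1"
  have E1nz: "E1c \<noteq> 0" using E1p by (simp add: E1c_def)
  note AL = alg_main[of E1c c1 "of_real lam" "qnum q 2" L2 a2 c2 E2 L3 a3 "qnum q 3" d1 d2, OF _ _ _ _ E1nz]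
  have I1: "\<Gamma> * a2^2 = E1c * (c2 + c1^2) + E1c * (d2 + d1^2) + (E2 - E1c) * (c1^2 + d1^2)"
    and I2: "\<Xi> * a2^2 = E1c^3 * ((c2 + c1^2) + (d2 + d1^2))"
    and I3: "2 * (of_real lam * qnum q 3 - 1) * L3 * (a3 - a2^2) = E1c * (c2 - d2)"
    using AL cf1 cf2 df1 df2 gi(4,5) t1 t2 unfolding Gd Xd E1c_def a2_def a3_def L2_def L3_def
    by simp_all
  define x where "x = cmod a2"
  have x0: "x \<ge> 0" by (simp add: x_def)
  have nl: "cmod (complex_of_real lam) = lam" using lam by simp
  have E1n: "cmod E1c = E1" using E1p by (simp add: E1c_def)
  have ub: "cmod (c2 + c1^2) \<le> 1"
  proof -
    have "cmod (c2 + c1^2) \<le> cmod c2 + cmod c1 ^ 2" using norm_triangle_ineq[of c2 "c1^2"] by (simp add: norm_power)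
    then show ?thesis using c by simp
  qed
  have vb: "cmod (d2 + d1^2) \<le> 1"
  proof -
    have "cmod (d2 + d1^2) \<le> cmod d2 + cmod d1 ^ 2" using norm_triangle_ineq[of d2 "d1^2"] by (simp add: norm_power)
    then show ?thesis using d by simp
  qed
  have c1b: "cmod (c1^2 + d1^2) \<le> 2"
  proof -
    have "cmod (c1^2 + d1^2) \<le> cmod c1 ^ 2 + cmod d1 ^ 2" using norm_triangle_ineq[of "c1^2" "d1^2"] by (simp add: norm_power)
    moreover have "cmod c1 ^ 2 \<le> 1" "cmod d1 ^ 2 \<le> 1" using c d by (simp_all add: power_le_one)
    ultimately show ?thesis by simp
  qed
  have c2b: "cmod (c2 - d2) \<le> 2"
  proof -
    have "cmod (c2 - d2) \<le> cmod c2 + cmod d2" by (rule norm_triangle_ineq4)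
    moreover have "cmod c2 \<le> 1" using c(2) zero_le_power2[of "cmod c1"] by linarith
    moreover have "cmod d2 \<le> 1" using d(2) zero_le_power2[of "cmod d1"] by linarith
    ultimately show ?thesis by simp
  qed
  have B1: "lam * cmod L2 * Q2r * x \<le> E1"
  proof -
    have eq: "E1c * c1 = of_real lam * of_real Q2r * (L2 * a2)"
      using cf1 t1 Q2 unfolding E1c_def L2_def a2_def by simp
    have "cmod (E1c * c1) \<le> E1" using E1n c(1) E1p by (simp add: norm_mult mult_left_le)
    moreover have "cmod (of_real lam * of_real Q2r * (L2 * a2)) = lam * cmod L2 * Q2r * x"
      using lam Q2p by (simp add: norm_mult x_def)
    ultimately show ?thesis using eq by simp
  qed
  have B2: "cmod \<Gamma> * x^2 \<le> 2 * (cmod (E2 - E1c) + E1)"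
  proof -
    have "cmod \<Gamma> * x^2 = cmod (\<Gamma> * a2^2)" by (simp add: norm_mult norm_power x_def)
    also have "\<dots> \<le> cmod (E1c * (c2 + c1^2)) + cmod (E1c * (d2 + d1^2)) + cmod ((E2 - E1c) * (c1^2 + d1^2))"
      unfolding I1 by (rule order_trans[OF norm_triangle_ineq add_right_mono[OF norm_triangle_ineq]])
    also have "\<dots> \<le> E1 + E1 + cmod (E2 - E1c) * 2"
    proof -
      have "cmod (E1c * (c2 + c1^2)) \<le> E1" using ub E1n E1p by (simp add: norm_mult mult_left_le)
      moreover have "cmod (E1c * (d2 + d1^2)) \<le> E1" using vb E1n E1p by (simp add: norm_mult mult_left_le)
      moreover have "cmod ((E2 - E1c) * (c1^2 + d1^2)) \<le> cmod (E2 - E1c) * 2"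
        using c1b by (simp add: norm_mult mult_left_mono)
      ultimately show ?thesis by linarith
    qed
    finally show ?thesis by simp
  qed
  have B3: "cmod \<Xi> * x^2 \<le> 2 * E1^3"
  proof -
    have "cmod \<Xi> * x^2 = cmod (\<Xi> * a2^2)" by (simp add: norm_mult norm_power x_def)
    also have "\<dots> = E1^3 * cmod ((c2 + c1^2) + (d2 + d1^2))" unfolding I2 using E1n by (simp add: norm_mult norm_power)
    also have "\<dots> \<le> E1^3 * 2"
    proof -
      have "cmod ((c2 + c1^2) + (d2 + d1^2)) \<le> 2"
        using ub vb norm_triangle_ineq[of "c2 + c1^2" "d2 + d1^2"] by linarith
      then show ?thesis using E1p by (intro mult_left_mono) auto
    qed
    finally show ?thesis by simp
  qed
  define M where "M = lam * Q3r - 1"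
  have M0: "M > 0" using lQ3 by (simp add: M_def)
  have B4: "cmod a3 \<le> x^2 + E1 / (M * cmod L3)"
  proof -
    have den: "of_real lam * qnum q 3 - 1 = complex_of_real M" using Q3 by (simp add: M_def)
    have I3': "2 * of_real M * L3 * (a3 - a2^2) = E1c * (c2 - d2)" using I3 den by simp
    have nz: "2 * complex_of_real M * L3 \<noteq> 0" using M0 L3nz by simp
    have a3e: "a3 = a2^2 + E1c * (c2 - d2) / (2 * of_real M * L3)"
      using I3' nz by (simp add: field_simps)
    have "cmod a3 \<le> cmod (a2^2) + cmod (E1c * (c2 - d2) / (2 * of_real M * L3))"
      unfolding a3e by (rule norm_triangle_ineq)
    also have "cmod (a2^2) = x^2" by (simp add: x_def norm_power)
    also have "cmod (E1c * (c2 - d2) / (2 * of_real M * L3)) = E1 * cmod (c2 - d2) / (2 * M * cmod L3)"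
      using E1n M0 by (simp add: norm_mult norm_divide)
    also have "\<dots> \<le> E1 * 2 / (2 * M * cmod L3)"
      using c2b E1p M0 L3nz by (intro divide_right_mono mult_left_mono) auto
    also have "\<dots> = E1 / (M * cmod L3)" by simp
    finally show ?thesis by simp
  qed
  have ReQ2: "Re (qnum q 2) = Q2r" using Q2 by simp
  have ReQ3: "Re (qnum q 3) = Q3r" using Q3 by simp
  have L2p: "cmod L2 > 0" using L2nz by simp
  have L3p: "cmod L3 > 0" using L3nz by simp
  have Gp: "cmod \<Gamma> > 0" using Gnz by simp
  have Xp: "cmod \<Xi> > 0" using Xnz by simp
  have P1: "x \<le> E1 / (lam * cmod L2 * Q2r)"
  proof -
    have pos: "lam * cmod L2 * Q2r > 0" using lam L2p Q2p by simp
    show ?thesis by (subst pos_le_divide_eq[OF pos]) (metis B1 mult.commute)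
  qed
  have x2G: "x^2 \<le> 2 * (cmod (E2 - E1c) + E1) / cmod \<Gamma>"
    using B2 Gp by (subst pos_le_divide_eq[OF Gp]) (simp add: mult.commute)
  have P2: "x \<le> sqrt (2 * (cmod (E2 - E1c) + E1) / cmod \<Gamma>)"
    using real_sqrt_le_mono[OF x2G] x0 by simp
  have x2X: "x^2 \<le> 2 * E1^3 / cmod \<Xi>"
    using B3 Xp by (subst pos_le_divide_eq[OF Xp]) (simp add: mult.commute)
  have sq: "sqrt (2 * E1^3 / cmod \<Xi>) = E1 * sqrt (2 * E1) / sqrt (cmod \<Xi>)"
  proof -
    have "2 * E1^3 = E1^2 * (2 * E1)" by (simp add: power2_eq_square power3_eq_cube)
    then show ?thesis using E1p by (simp add: real_sqrt_divide real_sqrt_mult)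
  qed
  have P3: "x \<le> E1 * sqrt (2 * E1) / sqrt (cmod \<Xi>)"
    using real_sqrt_le_mono[OF x2X] x0 sq by simp
  have x2L: "x^2 \<le> E1^2 / (lam^2 * Q2r^2 * (cmod L2)^2)"
  proof -
    have "x^2 \<le> (E1 / (lam * cmod L2 * Q2r))^2" using P1 x0 by (intro power_mono) auto
    also have "(E1 / (lam * cmod L2 * Q2r))^2 = E1^2 / (lam^2 * Q2r^2 * (cmod L2)^2)"
      by (simp add: power_divide power_mult_distrib ac_simps)
    finally show ?thesis .
  qed
  have P4: "cmod a3 \<le> E1 / (M * cmod L3) + min (E1^2 / (lam^2 * Q2r^2 * (cmod L2)^2))
              (2 * (cmod (E2 - E1c) + E1) / cmod \<Gamma>)"
    using B4 x2L x2G by simp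
  show ?thesis
    using P1 P2 P3 P4 unfolding ReQ2 ReQ3 M_def[symmetric] x_def a2_def a3_def L2_def L3_def E1c_def
    by simp
qed

end
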